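(* Let $k$ be a non-archimedean local field of residue characteristic $2$, with ring of integers $\mathfrak o$ and normalized valuation $\operatorname{ord}$. Let $B(x)=\sum_{i=1}^n a_i x_i^2$ be a diagonal quadratic form on $k^n$ with coefficients $a_i\in k$ satisfying $0\le \operatorname{ord} a_i\le 1$ for all $i$, and suppose $B$ is anisotropic over $k$. Then for every nonzero $x\in k^n$, \[ \max_i |a_i x_i^2| \;\ge\; |B(x)| \;\ge\; \max_i |4 a_i x_i^2| . \]
   Context: $|\cdot|$ is the normalized absolute value on $k$ ($|\varpi|=q^{-1}$ for a uniformizer $\varpi$, where $q$ is the cardinality of the residue field). A quadratic form is anisotropic if $B(x)=0$ only for $x=0$. *)

theory Defs
  imports Complex_Main
begin

text \<open>A non-archimedean local field is modelled as a field type 'a together with a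
normalized discrete valuation ord (only meaningful on nonzero elements; ord 0 plays the
role of +infinity and is never used), such that the field is complete w.r.t. ord and
the residue field is finite.\<close>

definition val_ring :: "('a::field \<Rightarrow> int) \<Rightarrow> 'a set" where
  "val_ring ord = {x. x = 0 \<or> 0 \<le> ord x}"

definition val_ideal :: "('a::field \<Rightarrow> int) \<Rightarrow> 'a set" where
  "val_ideal ord = {x. x = 0 \<or> 1 \<le> ord x}"

definition residue_field :: "('a::field \<Rightarrow> int) \<Rightarrow> 'a set set" where
  "residue_field ord =
     val_ring ord // {(x, y). x \<in> val_ring ord \<and> y \<in> val_ring ord \<and> x - y \<in> val_ideal ord}"

definition discrete_valuation :: "('a::field \<Rightarrow> int) \<Rightarrow> bool" where
  "discrete_valuation ord \<longleftrightarrow>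
     (\<forall>x y. x \<noteq> 0 \<longrightarrow> y \<noteq> 0 \<longrightarrow> ord (x * y) = ord x + ord y) \<and>
     (\<forall>x y. x \<noteq> 0 \<longrightarrow> y \<noteq> 0 \<longrightarrow> x + y \<noteq> 0 \<longrightarrow> min (ord x) (ord y) \<le> ord (x + y)) \<and>
     (\<exists>\<pi>. \<pi> \<noteq> 0 \<and> ord \<pi> = 1)"

definition val_cauchy :: "('a::field \<Rightarrow> int) \<Rightarrow> (nat \<Rightarrow> 'a) \<Rightarrow> bool" where
  "val_cauchy ord s \<longleftrightarrow>
     (\<forall>N::int. \<exists>M. \<forall>m\<ge>M. \<forall>n\<ge>M. s m - s n \<in> {x. x = 0 \<or> N \<le> ord x})"

definition val_converges :: "('a::field \<Rightarrow> int) \<Rightarrow> (nat \<Rightarrow> 'a) \<Rightarrow> 'a \<Rightarrow> bool" where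
  "val_converges ord s L \<longleftrightarrow>
     (\<forall>N::int. \<exists>M. \<forall>n\<ge>M. s n - L \<in> {x. x = 0 \<or> N \<le> ord x})"

definition nonarch_local_field :: "('a::field \<Rightarrow> int) \<Rightarrow> bool" where
  "nonarch_local_field ord \<longleftrightarrow>
     discrete_valuation ord \<and>
     (\<forall>s. val_cauchy ord s \<longrightarrow> (\<exists>L. val_converges ord s L)) \<and>
     finite (residue_field ord)"

definition residue_char_two :: "('a::field \<Rightarrow> int) \<Rightarrow> bool" where
  "residue_char_two ord \<longleftrightarrow> (2::'a) \<in> val_ideal ord"

definition nabs :: "('a::field \<Rightarrow> int) \<Rightarrow> 'a \<Rightarrow> real" where
  "nabs ord x = (if x = 0 then 0 else real (card (residue_field ord)) powi (- ord x))"

end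

theory Submission
  imports Defs
begin

definition vge :: "('a::field \<Rightarrow> int) \<Rightarrow> int \<Rightarrow> 'a \<Rightarrow> bool" where
  "vge ord N x \<longleftrightarrow> x = 0 \<or> N \<le> ord x"

lemma dv_mult: "discrete_valuation ord \<Longrightarrow> x \<noteq> 0 \<Longrightarrow> y \<noteq> 0 \<Longrightarrow> ord (x * y) = ord x + ord y"
  unfolding discrete_valuation_def by blast

lemma dv_add: "discrete_valuation ord \<Longrightarrow> x \<noteq> 0 \<Longrightarrow> y \<noteq> 0 \<Longrightarrow> x + y \<noteq> 0 \<Longrightarrow> min (ord x) (ord y) \<le> ord (x + y)"
  unfolding discrete_valuation_def by blast

lemma dv_one: "discrete_valuation ord \<Longrightarrow> ord (1::'a::field) = 0"
  using dv_mult[of ord "1::'a" 1] by simp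

lemma dv_minus_one: "discrete_valuation ord \<Longrightarrow> ord (-1::'a::field) = 0"
  using dv_mult[of ord "-1::'a" "-1"] dv_one[of ord] by simp

lemma dv_minus: "discrete_valuation ord \<Longrightarrow> (x::'a::field) \<noteq> 0 \<Longrightarrow> ord (-x) = ord x"
  using dv_mult[of ord "-1::'a" x] dv_minus_one[of ord] by simp

lemma dv_inverse: "discrete_valuation ord \<Longrightarrow> (x::'a::field) \<noteq> 0 \<Longrightarrow> ord (inverse x) = - ord x"
  using dv_mult[of ord x "inverse x"] dv_one[of ord] by simp

lemma vge_0[simp]: "vge ord N 0" by (simp add: vge_def)

lemma vge_mono: "M \<le> N \<Longrightarrow> vge ord N x \<Longrightarrow> vge ord M x"
  by (auto simp: vge_def)

lemma vge_mult: "discrete_valuation ord \<Longrightarrow> vge ord M x \<Longrightarrow> vge ord N y \<Longrightarrow> vge ord (M + N) (x * y)"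
  unfolding vge_def by (metis add_mono dv_mult mult_eq_0_iff)

lemma vge_add: "discrete_valuation ord \<Longrightarrow> vge ord N x \<Longrightarrow> vge ord N y \<Longrightarrow> vge ord N (x + y)"
  unfolding vge_def
  by (metis add.left_neutral add.right_neutral dv_add min.bounded_iff order_trans)

lemma vge_minus: "discrete_valuation ord \<Longrightarrow> vge ord N (-x) \<longleftrightarrow> vge ord N x"
  unfolding vge_def by (metis dv_minus neg_equal_0_iff_equal)

lemma vge_diff: "discrete_valuation ord \<Longrightarrow> vge ord N x \<Longrightarrow> vge ord N y \<Longrightarrow> vge ord N (x - y)"
  using vge_add[of ord N x "-y"] vge_minus[of ord N y] by simp

lemma vge_all_zero: "(\<And>N. vge ord N x) \<Longrightarrow> x = 0"
  using vge_def[of ord "ord x + 1" x] by auto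

lemma solve_artin_schreier:
  fixes ord :: "'a::field \<Rightarrow> int" and d :: 'a
  assumes dv: "discrete_valuation ord"
    and compl: "\<forall>s. val_cauchy ord s \<longrightarrow> (\<exists>L. val_converges ord s L)"
    and d: "vge ord 1 d"
  shows "\<exists>z. z^2 + z = d \<and> vge ord 1 z"
proof -
  define z :: "nat \<Rightarrow> 'a" where "z = rec_nat 0 (\<lambda>_ w. d - w^2)"
  have z0: "z 0 = 0" and zS: "\<And>k. z (Suc k) = d - (z k)^2" by (simp_all add: z_def)
  have zI: "vge ord 1 (z k)" for k
  proof (induction k)
    case 0 then show ?case by (simp add: z0)
  next
    case (Suc k)
    have "vge ord (1+1) (z k * z k)" by (rule vge_mult[OF dv Suc Suc])
    then have "vge ord 1 ((z k)^2)" by (simp add: power2_eq_square vge_mono[of 1 2])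
    then show ?case unfolding zS by (rule vge_diff[OF dv d])
  qed
  have zD: "vge ord (int k + 1) (z (Suc k) - z k)" for k
  proof (induction k)
    case 0 then show ?case using d by (simp add: z0 zS)
  next
    case (Suc k)
    have eq: "z (Suc (Suc k)) - z (Suc k) = - ((z (Suc k) - z k) * (z (Suc k) + z k))"
      by (simp add: zS power2_eq_square algebra_simps)
    have "vge ord (int k + 1 + 1) ((z (Suc k) - z k) * (z (Suc k) + z k))"
      by (rule vge_mult[OF dv Suc vge_add[OF dv zI zI]])
    then show ?case unfolding eq vge_minus[OF dv] by (simp add: add.commute)
  qed
  have zT: "vge ord (int n + 1) (z (n + p) - z n)" for n p
  proof (induction p)
    case 0 then show ?case by simp
  next
    case (Suc p)
    have "vge ord (int n + 1) (z (Suc (n + p)) - z (n + p))"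
      by (rule vge_mono[OF _ zD]) simp
    from vge_add[OF dv this Suc] show ?case by simp
  qed
  have "val_cauchy ord z"
    unfolding val_cauchy_def
  proof
    fix N :: int
    show "\<exists>M. \<forall>m\<ge>M. \<forall>n\<ge>M. z m - z n \<in> {x. x = 0 \<or> N \<le> ord x}"
    proof (intro exI allI impI)
      fix m n assume m: "nat N \<le> m" and n: "nat N \<le> n"
      show "z m - z n \<in> {x. x = 0 \<or> N \<le> ord x}"
      proof (cases "n \<le> m")
        case True
        then obtain p where "m = n + p" using le_Suc_ex by blast
        with zT[of n p] n have "vge ord N (z m - z n)"
          by (intro vge_mono[of N "int n + 1"]) auto
        then show ?thesis by (simp add: vge_def)
      next
        case False
        then obtain p where "n = m + p" using le_Suc_ex[of m n] by auto
        with zT[of m p] m have "vge ord N (z n - z m)"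
          by (intro vge_mono[of N "int m + 1"]) auto
        then have "vge ord N (-(z m - z n))" by simp
        then have "vge ord N (z m - z n)" by (simp only: vge_minus[OF dv])
        then show ?thesis by (simp add: vge_def)
      qed
    qed
  qed
  with compl obtain L where L: "val_converges ord z L" by blast
  have Lc: "\<exists>M. \<forall>n\<ge>M. vge ord N (z n - L)" for N
    using L unfolding val_converges_def vge_def by simp
  have L1: "vge ord 1 L"
  proof -
    obtain M where "\<forall>n\<ge>M. vge ord 1 (z n - L)" using Lc by blast
    then have "vge ord 1 (z M - L)" by simp
    from vge_diff[OF dv zI[of M] this] show ?thesis by simp
  qed
  have "vge ord N (L^2 + L - d)" for N
  proof -
    define N' where "N' = max N 1"
    obtain M where M: "\<forall>n\<ge>M. vge ord N' (z n - L)" using Lc by blast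
    have a: "vge ord N' (L - z M)" using M vge_minus[OF dv, of N' "z M - L"] by simp
    have b: "vge ord N' (L - z (Suc M))" using M vge_minus[OF dv, of N' "z (Suc M) - L"] by simp
    have c: "vge ord 1 (L + z M)" by (rule vge_add[OF dv L1 zI])
    have "vge ord (N' + 1) ((L - z M) * (L + z M))" by (rule vge_mult[OF dv a c])
    then have "vge ord N' ((L - z M) * (L + z M))" by (rule vge_mono[rotated]) simp
    from vge_add[OF dv this b]
    have "vge ord N' ((L - z M) * (L + z M) + (L - z (Suc M)))" .
    moreover have "(L - z M) * (L + z M) + (L - z (Suc M)) = L^2 + L - d"
      by (simp add: zS power2_eq_square algebra_simps)
    ultimately show ?thesis by (metis N'_def max.cobounded1 vge_mono)
  qed
  then have "L^2 + L - d = 0" by (rule vge_all_zero)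
  then show ?thesis using L1 by (intro exI[of _ L]) simp
qed


lemma card_res_ge1:
  assumes "finite (residue_field ord)"
  shows "1 \<le> real (card (residue_field ord))"
proof -
  have "(0::'a) \<in> val_ring ord" by (simp add: val_ring_def)
  then have "residue_field ord \<noteq> {}" unfolding residue_field_def quotient_def by blast
  with assms show ?thesis by (simp add: Suc_le_eq card_gt_0_iff)
qed

lemma nabs_nonneg: "finite (residue_field ord) \<Longrightarrow> 0 \<le> nabs ord x"
  using card_res_ge1[of ord] by (simp add: nabs_def)

lemma nabs_le_ord:
  assumes "finite (residue_field ord)" "x \<noteq> 0" "y \<noteq> 0" "ord y \<le> ord x"
  shows "nabs ord x \<le> nabs ord y"
  using assms card_res_ge1[of ord] by (simp add: nabs_def power_int_increasing)

lemma nabs_add_le: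
  assumes dv: "discrete_valuation ord" and fin: "finite (residue_field ord)"
    and x: "nabs ord x \<le> M" and y: "nabs ord y \<le> M" and M: "0 \<le> M"
  shows "nabs ord (x + y) \<le> M"
proof (cases "x = 0 \<or> y = 0 \<or> x + y = 0")
  case True then show ?thesis using x y M by (auto simp: nabs_def)
next
  case False
  then have "min (ord x) (ord y) \<le> ord (x + y)" using dv_add[OF dv] by blast
  then show ?thesis
  proof (cases "ord x \<le> ord y")
    case True
    then have "nabs ord (x + y) \<le> nabs ord x" using False \<open>min _ _ \<le> _\<close>
      by (intro nabs_le_ord[OF fin]) auto
    then show ?thesis using x by simp
  next
    case f2: False
    then have "nabs ord (x + y) \<le> nabs ord y" using False \<open>min _ _ \<le> _\<close>
      by (intro nabs_le_ord[OF fin]) auto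
    then show ?thesis using y by simp
  qed
qed

lemma nabs_sum_le:
  assumes dv: "discrete_valuation ord" and fin: "finite (residue_field ord)"
    and A: "finite A" and f: "\<forall>i\<in>A. nabs ord (f i) \<le> M" and M: "0 \<le> M"
  shows "nabs ord (sum f A) \<le> M"
  using A f
proof (induction A rule: finite_induct)
  case empty then show ?case using M by (simp add: nabs_def)
next
  case (insert i A)
  then show ?case by (simp add: nabs_add_le[OF dv fin] M)
qed

theorem lemma2p1:
  fixes ord :: "'a::field \<Rightarrow> int" and a :: "nat \<Rightarrow> 'a" and n :: nat and x :: "nat \<Rightarrow> 'a"
  assumes "nonarch_local_field ord"
    and "residue_char_two ord"
    and coeff: "\<forall>i<n. a i \<noteq> 0 \<and> 0 \<le> ord (a i) \<and> ord (a i) \<le> 1"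
    and aniso: "\<forall>y :: nat \<Rightarrow> 'a. (\<Sum>i<n. a i * (y i)\<^sup>2) = 0 \<longrightarrow> (\<forall>i<n. y i = 0)"
    and x_nz: "\<exists>i<n. x i \<noteq> 0"
  shows "(MAX i\<in>{..<n}. nabs ord (a i * (x i)\<^sup>2)) \<ge> nabs ord (\<Sum>i<n. a i * (x i)\<^sup>2)
       \<and> nabs ord (\<Sum>i<n. a i * (x i)\<^sup>2) \<ge> (MAX i\<in>{..<n}. nabs ord (4 * a i * (x i)\<^sup>2))"
proof -
  have dv: "discrete_valuation ord" and compl: "\<forall>s. val_cauchy ord s \<longrightarrow> (\<exists>L. val_converges ord s L)"
    and fin: "finite (residue_field ord)"
    using assms(1) unfolding nonarch_local_field_def by auto
  have two: "vge ord 1 (2::'a)" using assms(2) unfolding residue_char_two_def val_ideal_def vge_def by simp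
  have ne: "{..<n} \<noteq> {}" using x_nz by auto
  define S where "S = (\<Sum>i<n. a i * (x i)\<^sup>2)"
  have part1: "nabs ord S \<le> (MAX i\<in>{..<n}. nabs ord (a i * (x i)\<^sup>2))"
  proof -
    let ?M = "MAX i\<in>{..<n}. nabs ord (a i * (x i)\<^sup>2)"
    have "\<forall>i\<in>{..<n}. nabs ord (a i * (x i)\<^sup>2) \<le> ?M" by simp
    moreover have "0 \<le> ?M" using ne x_nz nabs_nonneg[OF fin] by (auto simp: Max_ge_iff)
    ultimately show ?thesis unfolding S_def by (intro nabs_sum_le[OF dv fin]) auto
  qed
  have key: "nabs ord (4 * a j * (x j)\<^sup>2) \<le> nabs ord S" if j: "j < n" for j
  proof (cases "4 * a j * (x j)\<^sup>2 = 0")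
    case True then show ?thesis using nabs_nonneg[OF fin] by (simp add: nabs_def)
  next
    case F4: False
    define T where "T = a j * (x j)\<^sup>2"
    have T0: "T \<noteq> 0" and f0: "(4::'a) \<noteq> 0" and xj: "x j \<noteq> 0" using F4 by (auto simp: T_def)
    have "S \<noteq> 0 \<and> ord S \<le> ord (4 * T)"
    proof (rule ccontr)
      assume "\<not> ?thesis"
      then have vS: "vge ord (ord (4 * T) + 1) S" by (auto simp: vge_def)
      define c where "c = S * inverse (4 * T)"
      have "vge ord (ord (4 * T) + 1 + - ord (4 * T)) c"
      proof -
        have "4 * T \<noteq> 0" using T0 f0 by simp
        then have "ord (inverse (4 * T)) = - ord (4 * T)" by (rule dv_inverse[OF dv])
        then have "vge ord (- ord (4 * T)) (inverse (4 * T))" by (simp add: vge_def)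
        from vge_mult[OF dv vS this] show ?thesis unfolding c_def .
      qed
      then have "vge ord 1 (-c)" by (simp add: vge_minus[OF dv])
      from solve_artin_schreier[OF dv compl this] obtain z where
        z: "z^2 + z = -c" and z1: "vge ord 1 z" by blast
      define s where "s = 1 + 2 * z"
      have s2: "s^2 = 1 - 4 * c"
      proof -
        have "s^2 = 1 + 4 * (z^2 + z)" by (simp add: s_def power2_eq_square algebra_simps)
        then show ?thesis using z by simp
      qed
      have "s \<noteq> 0"
      proof
        assume "s = 0"
        then have "2 * z = -1" by (simp add: s_def add_eq_0_iff)
        moreover have "vge ord (1 + 1) (2 * z)" by (rule vge_mult[OF dv two z1])
        ultimately have "vge ord 2 (-1::'a)" by simp
        then show False by (simp add: vge_def dv_minus_one[OF dv])
      qed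
      define y where "y = x(j := s * x j)"
      have yj: "y j \<noteq> 0" using \<open>s \<noteq> 0\<close> xj by (simp add: y_def)
      have "\<forall>i. a i * (y i)\<^sup>2 = a i * (x i)\<^sup>2 + (if i = j then T * (s^2 - 1) else 0)"
        by (simp add: y_def T_def power2_eq_square algebra_simps)
      then have "(\<Sum>i<n. a i * (y i)\<^sup>2) = S + T * (s^2 - 1)"
        using j by (simp add: sum.distrib S_def)
      also have "\<dots> = S - (4 * T) * c" by (simp add: s2 algebra_simps)
      also have "\<dots> = 0" using T0 f0 by (simp add: c_def)
      finally show False using aniso yj j by blast
    qed
    then show ?thesis using F4 by (intro nabs_le_ord[OF fin]) (auto simp: T_def mult.assoc)
  qed
  have part2: "(MAX i\<in>{..<n}. nabs ord (4 * a i * (x i)\<^sup>2)) \<le> nabs ord S"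
    using ne key by (simp add: Max_le_iff)
  show ?thesis using part1 part2 by (simp add: S_def)
qed

end
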